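(* Let $p>3$ be a prime, $e$ a positive integer, $q=p^e$, and $k$ an integer with $1\le k\le e$. Then $D_{p^k,3}(1,x)$ is not a permutation polynomial of $\mathbb{F}_q$.
   Context: For $n\ge 1$ and $a\in\mathbb{F}_q$, $D_{n,3}(a,x)=\sum_{i=0}^{\lfloor n/2\rfloor}\frac{n-3i}{n-i}\binom{n-i}{i}(-x)^i a^{n-2i}\in\mathbb{F}_q[x]$, where each coefficient $\frac{n-3i}{n-i}\binom{n-i}{i}$ is an integer read modulo $p$; and $D_{0,3}(a,x)=-1$. A polynomial $g\in\mathbb{F}_q[x]$ is a permutation polynomial of $\mathbb{F}_q$ if $c\mapsto g(c)$ is a bijection $\mathbb{F}_q\to\mathbb{F}_q$. *)

theory Defs
  imports "HOL-Computational_Algebra.Polynomial"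
begin

text \<open>Integer coefficient (n-3i)/(n-i) * binom(n-i,i); the division is exact for
  0 <= i <= n/2, n >= 1.\<close>
definition dickson3_coeff :: "nat \<Rightarrow> nat \<Rightarrow> int" where
  "dickson3_coeff n i = ((int n - 3 * int i) * int ((n - i) choose i)) div int (n - i)"

definition D3 :: "nat \<Rightarrow> 'a::comm_ring_1 \<Rightarrow> 'a poly" where
  "D3 n a = (if n = 0 then -1 else
     (\<Sum>i\<le>n div 2. smult (of_int (dickson3_coeff n i) * a ^ (n - 2 * i)) ([:0, -1:] ^ i)))"

definition perm_poly :: "'a::{finite,field} poly \<Rightarrow> bool" where
  "perm_poly g \<longleftrightarrow> bij (\<lambda>c. poly g c)"

end

theory Submission imports Defs "HOL-Number_Theory.Number_Theory" "HOL-Computational_Algebra.Polynomial" begin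

definition S :: "nat \<Rightarrow> int" where "S N = (\<Sum>i\<le>N. int (N - i choose i) * 2 ^ i)"

lemma S_rec: "S (Suc (Suc N)) = S (Suc N) + 2 * S N"
proof -
  have "S (Suc (Suc N)) = 1 + (\<Sum>i\<le>Suc N. int (Suc N - i choose Suc i) * 2 ^ Suc i)"
    unfolding S_def by (subst sum.atMost_Suc_shift) simp
  also have "(\<Sum>i\<le>Suc N. int (Suc N - i choose Suc i) * 2 ^ Suc i)
      = (\<Sum>i\<le>N. int (Suc N - i choose Suc i) * 2 ^ Suc i)"
    by simp
  also have "\<dots> = (\<Sum>i\<le>N. int (N - i choose Suc i) * 2 ^ Suc i)
                 + (\<Sum>i\<le>N. int (N - i choose i) * 2 ^ Suc i)"
    by (subst sum.distrib[symmetric], rule sum.cong) (auto simp: Suc_diff_le algebra_simps)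
  also have "(\<Sum>i\<le>N. int (N - i choose i) * 2 ^ Suc i) = 2 * S N"
    unfolding S_def by (simp add: sum_distrib_left algebra_simps)
  also have "1 + ((\<Sum>i\<le>N. int (N - i choose Suc i) * 2 ^ Suc i) + 2 * S N) = S (Suc N) + 2 * S N"
  proof -
    have "S (Suc N) = 1 + (\<Sum>i\<le>N. int (N - i choose Suc i) * 2 ^ Suc i)"
      unfolding S_def by (subst sum.atMost_Suc_shift) simp
    then show ?thesis by simp
  qed
  finally show ?thesis .
qed

lemma S_closed: "3 * S N = 2 ^ (N+1) - (-1) ^ (N+1)"
proof (induction N rule: nat_less_induct)
  case (1 N)
  show ?case
  proof (cases N)
    case 0 then show ?thesis by (simp add: S_def)
  next
    case (Suc M) note M = this
    show ?thesis
    proof (cases M)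
      case 0 then show ?thesis using M by (simp add: S_def)
    next
      case (Suc L)
      have h1: "3 * S (Suc L) = 2 ^ (L+2) - (-1) ^ (L+2)" using 1 M Suc by auto
      have h2: "3 * S L = 2 ^ (L+1) - (-1) ^ (L+1)" using 1 M Suc by auto
      have "3 * S N = 3 * S (Suc L) + 2 * (3 * S L)" using M Suc S_rec[of L] by (simp add: algebra_simps)
      also have "\<dots> = 2 ^ (N+1) - (-1) ^ (N+1)" unfolding h1 h2 using M Suc by (simp add: algebra_simps)
      finally show ?thesis .
    qed
  qed
qed

lemma coeff_eq:
  assumes "1 \<le> i" "2 * i \<le> n"
  shows "dickson3_coeff n i = int (n - i choose i) - 2 * int (n - i - 1 choose (i - 1))"
proof -
  obtain M where Md: "M = n - i" by blast
  have M: "M \<ge> 1" "i \<le> M" using assms Md by auto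
  have ab: "i * (M choose i) = M * (M - 1 choose (i - 1))"
    using binomial_absorption[of "i - 1" M] assms(1) by simp
  have e1: "int n - 3 * int i = int M - 2 * int i" using assms Md by auto
  have e2: "int i * int (M choose i) = int M * int (M - 1 choose (i - 1))"
    using ab by (metis of_nat_mult)
  have X: "(int n - 3 * int i) * int (M choose i)
        = int M * (int (M choose i) - 2 * int (M - 1 choose (i - 1)))"
    unfolding e1 using e2 by (simp add: algebra_simps)
  have "dickson3_coeff n i = ((int n - 3 * int i) * int (M choose i)) div int M"
    unfolding dickson3_coeff_def Md ..
  also have "\<dots> = int (M choose i) - 2 * int (M - 1 choose (i - 1))"
    unfolding X using M(1) by simp
  finally show ?thesis using Md by simp
qed

lemma sum_ext:
  assumes "N div 2 \<le> K"
  shows "(\<Sum>i\<le>K. int (N - i choose i) * 2 ^ i) = S N"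
proof -
  have z: "int (N - i choose i) * 2 ^ i = 0" if "N div 2 < i" for i
    using that by (simp add: binomial_eq_0)
  have "(\<Sum>i\<le>K. int (N - i choose i) * 2 ^ i) = (\<Sum>i\<le>N div 2. int (N - i choose i) * 2 ^ i)"
    by (rule sum.mono_neutral_right) (use assms z in auto)
  moreover have "S N = (\<Sum>i\<le>N div 2. int (N - i choose i) * 2 ^ i)"
    unfolding S_def by (rule sum.mono_neutral_right) (use z in auto)
  ultimately show ?thesis by simp
qed

lemma A_eq:
  assumes "n = 2 * m + 3"
  shows "(\<Sum>i\<le>n div 2. dickson3_coeff n i * 2 ^ i) = 1"
proof -
  have nd: "n div 2 = Suc m" using assms by simp
  have "(\<Sum>i\<le>n div 2. dickson3_coeff n i * 2 ^ i)
     = (\<Sum>i\<le>Suc m. int (n - i choose i) * 2 ^ i - 2 * ((if i = 0 then 0 else int (n - i - 1 choose (i - 1))) * 2 ^ i))"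
    unfolding nd
  proof (rule sum.cong)
    fix i assume "i \<in> {..Suc m}"
    then have "2 * i \<le> n" using assms by auto
    then show "dickson3_coeff n i * 2 ^ i = int (n - i choose i) * 2 ^ i - 2 * ((if i = 0 then 0 else int (n - i - 1 choose (i - 1))) * 2 ^ i)"
    proof (cases "i = 0")
      case True then show ?thesis using assms by (simp add: dickson3_coeff_def)
    next
      case False
      have "dickson3_coeff n i = int (n - i choose i) - 2 * int (n - i - 1 choose (i - 1))"
        by (rule coeff_eq) (use False \<open>2 * i \<le> n\<close> in auto)
      then show ?thesis using False by (simp only: if_False) (simp add: algebra_simps)
    qed
  qed simp
  also have "\<dots> = (\<Sum>i\<le>Suc m. int (n - i choose i) * 2 ^ i) - 2 * (\<Sum>i\<le>Suc m. (if i = 0 then 0 else int (n - i - 1 choose (i - 1))) * 2 ^ i)"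
    by (simp add: sum_subtractf sum_distrib_left)
  also have "(\<Sum>i\<le>Suc m. int (n - i choose i) * 2 ^ i) = S n"
    by (rule sum_ext) (simp add: nd)
  also have "(\<Sum>i\<le>Suc m. (if i = 0 then 0 else int (n - i - 1 choose (i - 1))) * 2 ^ i)
       = (\<Sum>j\<le>m. int ((n - 2) - j choose j) * 2 ^ Suc j)"
    by (subst sum.atMost_Suc_shift) (simp add: algebra_simps)
  also have "\<dots> = 2 * (\<Sum>j\<le>m. int ((n - 2) - j choose j) * 2 ^ j)"
    by (simp add: sum_distrib_left algebra_simps)
  also have "(\<Sum>j\<le>m. int ((n - 2) - j choose j) * 2 ^ j) = S (n - 2)"
    by (rule sum_ext) (simp add: assms)
  finally have A: "(\<Sum>i\<le>n div 2. dickson3_coeff n i * 2 ^ i) = S n - 4 * S (n - 2)" by simp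
  have "3 * S n = 2 ^ (n+1) - 1" using S_closed[of n] assms by simp
  moreover have "3 * S (n - 2) = 2 ^ (n - 1) - 1" using S_closed[of "n-2"] assms by simp
  moreover have "(2::int) ^ (n+1) = 4 * 2 ^ (n - 1)" using assms by (simp add: power_add)
  ultimately have "3 * (S n - 4 * S (n - 2)) = 3" by (simp add: algebra_simps)
  then show ?thesis using A by simp
qed

lemma poly_D3:
  assumes "n > 0"
  shows "poly (D3 n (1::'a::comm_ring_1)) c = (\<Sum>i\<le>n div 2. of_int (dickson3_coeff n i) * (- c) ^ i)"
  using assms by (simp add: D3_def poly_sum)

theorem corollary2p8:
  fixes p e k :: nat
  assumes "prime p" and "p > 3" and "e > 0"
    and "1 \<le> k" and "k \<le> e"
    and "card (UNIV::'a set) = p ^ e"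
  shows "\<not> perm_poly (D3 (p ^ k) (1::'a::{finite,field}))"
proof
  assume pp: "perm_poly (D3 (p ^ k) (1::'a))"
  define n where "n = p ^ k"
  have "odd p" using assms(1,2) prime_odd_nat by auto
  then have "odd n" unfolding n_def by simp
  have "p ^ 1 \<le> p ^ k" by (rule power_increasing) (use assms in auto)
  then have "n \<ge> p" unfolding n_def by simp
  then have "n \<ge> 4" using assms(2) by simp
  have m: "n = 2 * ((n - 3) div 2) + 3" using \<open>odd n\<close> \<open>n \<ge> 4\<close>
    by presburger
  have np: "n > 0" using m by simp
  have v2: "poly (D3 n (1::'a)) (-2) = 1"
  proof -
    have "poly (D3 n (1::'a)) (-2) = (\<Sum>i\<le>n div 2. of_int (dickson3_coeff n i) * 2 ^ i)"
      unfolding poly_D3[OF np] by simp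
    also have "\<dots> = of_int (\<Sum>i\<le>n div 2. dickson3_coeff n i * 2 ^ i)" by simp
    also have "\<dots> = 1" using A_eq[OF m] by simp
    finally show ?thesis .
  qed
  have v0: "poly (D3 n (1::'a)) 0 = 1"
  proof -
    have "poly (D3 n (1::'a)) 0 = (\<Sum>i\<le>n div 2. of_int (dickson3_coeff n i) * (0::'a) ^ i)"
      unfolding poly_D3[OF np] by simp
    also have "\<dots> = of_int (dickson3_coeff n 0)"
      by (subst sum.atMost_shift) simp
    also have "\<dots> = 1" using np by (simp add: dickson3_coeff_def)
    finally show ?thesis .
  qed
  have fin: "finite (UNIV :: 'a set)" by simp
  have dv: "CHAR('a) dvd p ^ e" using CHAR_dvd_CARD[where 'a='a] assms(6) by simp
  have pr: "prime CHAR('a)" by (rule prime_CHAR_semidom[OF finite_imp_CHAR_pos[OF fin]])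
  have "CHAR('a) dvd p" by (rule prime_dvd_power[OF pr dv])
  then have ch: "CHAR('a) = p" using primes_dvd_imp_eq[OF pr assms(1)] by simp
  have inj: "inj (\<lambda>c. poly (D3 n (1::'a)) c)" using pp unfolding perm_poly_def n_def bij_def by simp
  have "(-2::'a) = 0" by (rule injD[OF inj]) (simp add: v0 v2)
  then have "of_nat 2 = (0::'a)" by simp
  then have "CHAR('a) dvd 2" by (simp only: of_nat_eq_0_iff_char_dvd)
  then have "p dvd 2" using ch by simp
  then have "p \<le> 2" by (rule dvd_imp_le) simp
  then show False using assms(2) by simp
qed

end
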